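(* Let $n,r\in\mathbb N$ be positive integers, $\mathbf p\in\mathcal P_n$, and $\mathbf Z=(Z_1,\dots,Z_n)\sim\mathrm{Multinomial}(nr,\mathbf p)$. Then for every $\mu>0$, $$\mathbb P\Big[D\Big(\tfrac{\mathbf Z}{nr}\,\Big\|\,\mathbf p\Big)\ge\frac{\Delta(r)+\mu}{r}\Big]\le\sqrt{2\pi e\, n r}\;e^{-n\mu}.$$
   Context: $\mathcal P_n=\{(p_1,\dots,p_n):p_i\ge0,\sum_ip_i=1\}$. $D(\mathbf q\|\mathbf p)=\sum_i q_i\log(q_i/p_i)$ is the Kullback–Leibler divergence with natural logarithms and $0\log 0=0$. $\Psi(t)=(1+t)\log(1+t)-t\log t$ for $t>0$, $\zeta$ is the Riemann zeta function, and $\Delta(r)=\inf_{q>2}\big\{(1-\frac1q)\Psi(r)+\frac1q\log[1+(2\pi)^{-q/2}\zeta(q/2)]\big\}$. *)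

theory Defs
  imports "HOL-Analysis.Analysis"
begin

definition prob_simplex :: "nat \<Rightarrow> (nat \<Rightarrow> real) \<Rightarrow> bool" where
  "prob_simplex n p \<longleftrightarrow> (\<forall>i<n. p i \<ge> 0) \<and> (\<Sum>i<n. p i) = 1"

definition multinomial_support :: "nat \<Rightarrow> nat \<Rightarrow> (nat \<Rightarrow> nat) set" where
  "multinomial_support n N = {z. (\<forall>i. n \<le> i \<longrightarrow> z i = 0) \<and> (\<Sum>i<n. z i) = N}"

definition multinomial_pmf :: "nat \<Rightarrow> nat \<Rightarrow> (nat \<Rightarrow> real) \<Rightarrow> (nat \<Rightarrow> nat) \<Rightarrow> real" where
  "multinomial_pmf n N p z = fact N / (\<Prod>i<n. fact (z i)) * (\<Prod>i<n. p i ^ z i)"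

definition multinomial_prob :: "nat \<Rightarrow> nat \<Rightarrow> (nat \<Rightarrow> real) \<Rightarrow> ((nat \<Rightarrow> nat) \<Rightarrow> bool) \<Rightarrow> real" where
  "multinomial_prob n N p E = (\<Sum>z\<in>{z\<in>multinomial_support n N. E z}. multinomial_pmf n N p z)"

definition kl_div :: "nat \<Rightarrow> (nat \<Rightarrow> real) \<Rightarrow> (nat \<Rightarrow> real) \<Rightarrow> real" where
  "kl_div n q p = (\<Sum>i<n. if q i = 0 then 0 else q i * ln (q i / p i))"

definition Psi :: "real \<Rightarrow> real" where
  "Psi t = (1 + t) * ln (1 + t) - t * ln t"

definition zeta_real :: "real \<Rightarrow> real" where
  "zeta_real s = (\<Sum>k. 1 / (real (Suc k)) powr s)"

definition Delta :: "real \<Rightarrow> real" where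
  "Delta r = Inf ((\<lambda>q. (1 - 1/q) * Psi r + (1/q) * ln (1 + (2*pi) powr (-q/2) * zeta_real (q/2))) ` {2<..})"

end

theory Submission
  imports Defs "HOL-Real_Asymp.Real_Asymp"
begin


lemma ln_lower: fixes u :: real assumes "0 \<le> u" "u < 1"
  shows "2*u \<le> ln (1+u) - ln (1-u)"
proof -
  let ?f = "\<lambda>x::real. ln (1+x) - ln (1-x) - 2*x"
  have "?f 0 \<le> ?f u"
  proof (rule DERIV_nonneg_imp_nondecreasing[OF assms(1)])
    fix x :: real assume x: "0 \<le> x" "x \<le> u"
    hence x1: "x < 1" using assms by linarith
    have xx: "x*x < 1" using x x1 by (metis abs_of_nonneg abs_square_less_1 power2_eq_square)
    have "DERIV ?f x :> 2*x^2/((1+x)*(1-x))"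
      using x x1 xx by (auto intro!: derivative_eq_intros simp: field_simps power2_eq_square)
    moreover have "2*x^2/((1+x)*(1-x)) \<ge> 0" using x x1 by simp
    ultimately show "\<exists>y. DERIV ?f x :> y \<and> y \<ge> 0" by blast
  qed
  thus ?thesis by simp
qed

lemma ln_upper: fixes u :: real assumes "0 \<le> u" "u < 1"
  shows "ln (1+u) - ln (1-u) \<le> 2*u + (2/3)*u^3/(1-u^2)"
proof -
  let ?f = "\<lambda>x::real. 2*x + (2/3)*x^3/(1-x^2) - (ln (1+x) - ln (1-x))"
  have "?f 0 \<le> ?f u"
  proof (rule DERIV_nonneg_imp_nondecreasing[OF assms(1)])
    fix x :: real assume x: "0 \<le> x" "x \<le> u"
    hence x1: "x < 1" using assms by linarith
    have xx: "x*x < 1" using x x1 by (metis abs_of_nonneg abs_square_less_1 power2_eq_square)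
    have "DERIV ?f x :> (4/3)*x^4/(1-x^2)^2"
      using x x1 xx apply (auto intro!: derivative_eq_intros simp: power2_eq_square)
      apply (simp add: field_simps power2_eq_square power3_eq_cube power4_eq_xxxx)
    proof -
      have p: "(1-x*x)*(1-x*x) > 0" using xx by simp
      have d1: "9 + x*(x*(x*(x*9))) - x*(x*18) = 9*((1-x*x)*(1-x*x))" by algebra
      have d2: "3 + x*(x*(x*(x*3))) - x*(x*6) = 3*((1-x*x)*(1-x*x))" by algebra
      show "(x * (x * 18) + x * (x * (x * (x * (x * (x * 6))))) - x * (x * (x * (x * 24)))) /
        (9 + x * (x * (x * (x * 9))) - x * (x * 18)) =
        x * (x * 2) + (x * (x * (x * (x * 4))) - x * (x * (x * (x * (x * (x * 4)))))) /
        (3 + x * (x * (x * (x * 3))) - x * (x * 6))"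
        unfolding d1 d2 using p by (simp add: field_simps) (simp add: algebra_simps)?
    qed
    moreover have "(4/3)*x^4/(1-x^2)^2 \<ge> 0" by simp
    ultimately show "\<exists>y. DERIV ?f x :> y \<and> y \<ge> 0" by blast
  qed
  thus ?thesis by simp
qed


definition stir :: "nat \<Rightarrow> real" where
  "stir n = ln (fact n) + real n - (real n + 1/2) * ln (real n)"

lemma stir_step: assumes "n \<ge> 1"
  shows "stir n - stir (Suc n) = (real n + 1/2) * (ln (real n + 1) - ln (real n)) - 1"
proof -
  have "ln (fact (Suc n) :: real) = ln (real n + 1) + ln (fact n)"
    by (simp add: ln_mult add.commute)
  thus ?thesis unfolding stir_def by (simp add: algebra_simps)
qed

lemma stir_diff_bounds: assumes "n \<ge> 1"
  shows "0 \<le> stir n - stir (Suc n)" "stir n - stir (Suc n) \<le> 1/(12*real n) - 1/(12*(real n + 1))"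
proof -
  define m where "m = real n"
  have m: "m \<ge> 1" using assms unfolding m_def by simp
  define u where "u = 1/(2*m+1)"
  have u: "0 \<le> u" "u < 1" using m unfolding u_def by auto
  have "ln (1+u) - ln (1-u) = ln ((2*m+2)/(2*m+1)) - ln ((2*m)/(2*m+1))"
    unfolding u_def using m by (simp add: field_simps)
  also have "\<dots> = ln (m+1) - ln m"
    using m ln_mult[of 2 "m+1"] by (simp add: ln_div ln_mult algebra_simps)
  finally have L: "ln (1+u) - ln (1-u) = ln (m+1) - ln m" .
  have S: "stir n - stir (Suc n) = (m + 1/2) * (ln (1+u) - ln (1-u)) - 1"
    unfolding L m_def using stir_step[OF assms] by simp
  have mu: "(m + 1/2) * (2*u) = 1" unfolding u_def using m by (simp add: field_simps)
  have "(m + 1/2) * (2*u) \<le> (m + 1/2) * (ln (1+u) - ln (1-u))"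
    using ln_lower[OF u] m by (intro mult_left_mono) auto
  thus "0 \<le> stir n - stir (Suc n)" using S mu by simp
  have "(m + 1/2) * (ln (1+u) - ln (1-u)) \<le> (m + 1/2) * (2*u + (2/3)*u^3/(1-u^2))"
    using ln_upper[OF u] m by (intro mult_left_mono) auto
  also have "(m + 1/2) * (2*u + (2/3)*u^3/(1-u^2)) = 1 + 1/(12*m) - 1/(12*(m+1))"
  proof -
    have p: "2*m+1 > 0" using m by simp
    have q: "0 < 1 + (m * 4 + m * (m * 4))" using m by (simp add: add_pos_nonneg)
    have "1 - u^2 = 4*m*(m+1)/(2*m+1)^2" unfolding u_def using p q
      by (simp add: field_simps power2_eq_square)
    hence "u^3/(1-u^2) = u^3 / (4*m*(m+1)/(2*m+1)^2)" by (simp only:)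
    also have "\<dots> = u * (u^2*(2*m+1)^2) / (4*m*(m+1))"
      by (simp add: power3_eq_cube power2_eq_square)
    also have "u^2*(2*m+1)^2 = 1" unfolding u_def using p by (simp add: field_simps)
    finally have "u^3/(1-u^2) = u/(4*m*(m+1))" by simp
    hence vv: "(2/3)*u^3/(1-u^2) = (2/3)*(u/(4*m*(m+1)))" by (metis times_divide_eq_right)
    have "(m + 1/2) * (2*u + (2/3)*u^3/(1-u^2)) = (m+1/2)*(2*u) + (2/3)*((m+1/2)*u)/(4*m*(m+1))"
      unfolding vv by (simp add: algebra_simps add_divide_distrib)
    also have "(m+1/2)*u = 1/2" unfolding u_def using p by (simp add: field_simps)
    also have "(m+1/2)*(2*u) = 1" using mu .
    also have "1 + (2/3)*(1/2)/(4*m*(m+1)) = 1 + 1/(12*m) - 1/(12*(m+1))"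
    proof -
      have a: "m > 0" "m + 1 > 0" "m*(m+1) > 0" using m by auto
      show ?thesis using a by (simp add: field_simps)
    qed
    finally show ?thesis .
  qed
  finally show "stir n - stir (Suc n) \<le> 1/(12*real n) - 1/(12*(real n + 1))"
    using S unfolding m_def by simp
qed


lemma wallis_step_alg: fixes A G m :: real assumes "G > 0" "m \<ge> 0"
  shows "A^4 / (G^2 * (2*m+1)) * (4*(m+1)^2 / ((2*m+1)*(2*m+3))) =
         (2*A*(m+1))^4 / (((2*m+2)*(2*m+1)*G)^2 * (2*m+3))"
proof -
  define K where "K = 4*(m+1)^2"
  have K: "K > 0" unfolding K_def using assms by simp
  have e1: "(2*A*(m+1))^4 = K * (K * A^4)" unfolding K_def by (simp add: power_mult_distrib power2_eq_square power4_eq_xxxx)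
  have e2: "((2*m+2)*(2*m+1)*G)^2 * (2*m+3) = K * ((2*m+1)*(G^2 * (2*m+1)) * (2*m+3))"
    unfolding K_def by (simp add: power_mult_distrib power2_eq_square algebra_simps)
  have "A^4 / (G^2 * (2*m+1)) * (K / ((2*m+1)*(2*m+3))) = (K * A^4) / ((2*m+1)*(G^2 * (2*m+1)) * (2*m+3))"
    by (simp add: ac_simps)
  also have "\<dots> = (K * (K * A^4)) / (K * ((2*m+1)*(G^2 * (2*m+1)) * (2*m+3)))"
    using K by simp
  finally show ?thesis unfolding e1 e2 K_def .
qed

lemma wallis_closed: "(\<Prod>k=1..n. 4 * (real k)^2 / (4 * (real k)^2 - 1)) =
   (2^n * fact n)^4 / ((fact (2*n))^2 * (2*real n+1))"
proof (induction n)
  case 0 then show ?case by simp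
next
  case (Suc n)
  define m where "m = real n"
  have f1: "(2^Suc n * fact (Suc n) :: real) = 2 * (2^n * fact n) * (m+1)" unfolding m_def by (simp add: algebra_simps)
  have f2: "(fact (2 * Suc n) :: real) = (2*m+2)*(2*m+1) * fact (2*n)"
    unfolding m_def by (simp add: algebra_simps)
  have pos: "(fact (2*n) :: real) > 0" "m \<ge> 0" unfolding m_def by auto
  have d: "4 * (m+1)^2 - 1 = (2*m+1)*(2*m+3)" by (simp add: algebra_simps power2_eq_square)
  have "(\<Prod>k=1..Suc n. 4 * (real k)^2 / (4 * (real k)^2 - 1)) =
        (2^n * fact n)^4 / ((fact (2*n))^2 * (2*m+1)) * (4 * (m+1)^2 / (4 * (m+1)^2 - 1))"
    using Suc unfolding m_def by (simp add: add.commute)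
  also have "\<dots> = (2^Suc n * fact (Suc n))^4 / ((fact (2*Suc n))^2 * (2*m+3))"
    unfolding f1 f2 d by (rule wallis_step_alg[OF pos])
  also have "2*m+3 = 2*real (Suc n)+1" unfolding m_def by simp
  finally show ?case .
qed


lemma stir_mono: assumes "1 \<le> m" "m \<le> n" shows "stir n \<le> stir m"
  using assms(2)
proof (induction n rule: dec_induct)
  case base then show ?case by simp
next
  case (step k)
  have "stir (Suc k) \<le> stir k" using stir_diff_bounds(1)[of k] step assms by simp
  thus ?case using step by simp
qed

lemma stir_mono2: assumes "1 \<le> m" "m \<le> n" shows "stir m - 1/(12*real m) \<le> stir n - 1/(12*real n)"
  using assms(2)
proof (induction n rule: dec_induct)
  case base then show ?case by simp
next
  case (step k)
  have "stir k - stir (Suc k) \<le> 1/(12*real k) - 1/(12*(real k + 1))"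
    using stir_diff_bounds(2)[of k] step assms by simp
  hence "stir k - 1/(12*real k) \<le> stir (Suc k) - 1/(12*real (Suc k))" by (simp add: add.commute)
  thus ?case using step by simp
qed

lemma stir_1: "stir 1 = 1" unfolding stir_def by simp

lemma stir_ge: assumes "n \<ge> 1" shows "stir n \<ge> 11/12"
proof -
  have "1 - 1/12 \<le> stir n - 1/(12*real n)" using stir_mono2[of 1 n] assms stir_1 by simp
  moreover have "1/(12*real n) \<ge> 0" by simp
  ultimately show ?thesis by linarith
qed

lemma stir_le_1: assumes "n \<ge> 1" shows "stir n \<le> 1"
  using stir_mono[of 1 n] assms stir_1 by simp

lemma stir_limit: obtains L where "stir \<longlonglongrightarrow> L" "\<And>n. n \<ge> 1 \<Longrightarrow> L \<le> stir n"
proof -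
  have "antimono_on UNIV (\<lambda>k. stir (Suc k))"
    by (intro monotone_onI) (simp add: stir_mono)
  moreover have "\<forall>i. 11/12 \<le> stir (Suc i)" using stir_ge by simp
  ultimately obtain L where L: "(\<lambda>k. stir (Suc k)) \<longlonglongrightarrow> L" "\<forall>i. L \<le> stir (Suc i)"
    by (rule decseq_convergent)
  show ?thesis
  proof (rule that)
    show "stir \<longlonglongrightarrow> L" using L(1) by (simp add: filterlim_sequentially_Suc)
    fix n :: nat assume "n \<ge> 1"
    then obtain k where "n = Suc k" by (cases n) auto
    thus "L \<le> stir n" using L(2) by simp
  qed
qed

lemma ln_wallis: assumes "n \<ge> 1"
  shows "ln (\<Prod>k=1..n. 4 * (real k)^2 / (4 * (real k)^2 - 1)) =
         4 * stir n - 2 * stir (2*n) + ln (real n / (2*(2*real n + 1)))"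
proof -
  define m where "m = real n"
  have m: "m \<ge> 1" using assms unfolding m_def by simp
  have fpos: "(fact n :: real) > 0" "(fact (2*n) :: real) > 0" by auto
  have l1: "ln (fact n :: real) = stir n - m + (m+1/2) * ln m" unfolding stir_def m_def by simp
  have l2: "ln (fact (2*n) :: real) = stir (2*n) - 2*m + (2*m+1/2) * (ln 2 + ln m)"
    unfolding stir_def m_def using m assms by (simp add: ln_mult)
  have "ln ((2^n * fact n)^4 / ((fact (2*n))^2 * (2*m+1)) :: real)
        = 4 * (m * ln 2 + ln (fact n)) - 2 * ln (fact (2*n)) - ln (2*m+1)"
    using fpos m unfolding m_def by (simp add: ln_mult ln_div ln_realpow)
  also have "\<dots> = 4 * stir n - 2 * stir (2*n) + (ln m - ln 2 - ln (2*m+1))"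
    unfolding l1 l2 by (simp add: algebra_simps)
  also have "ln m - ln 2 - ln (2*m+1) = ln (m / (2*(2*m+1)))"
    using m assms ln_mult[of 2 "2*m+1"] by (simp add: ln_div)
  finally show ?thesis unfolding wallis_closed m_def .
qed

lemma stir_lim_value: "stir \<longlonglongrightarrow> ln (2*pi) / 2"
proof -
  obtain L where L: "stir \<longlonglongrightarrow> L" "\<And>n. n \<ge> 1 \<Longrightarrow> L \<le> stir n" using stir_limit by blast
  have L2: "(\<lambda>n. stir (2*n)) \<longlonglongrightarrow> L"
    using LIMSEQ_subseq_LIMSEQ[OF L(1), of "\<lambda>n. 2*n"] by (simp add: strict_mono_def o_def)
  have q: "(\<lambda>n. real n / (2*(2*real n + 1))) \<longlonglongrightarrow> 1/4" by real_asymp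
  have A: "(\<lambda>n. 4 * stir n - 2 * stir (2*n) + ln (real n / (2*(2*real n + 1)))) \<longlonglongrightarrow> 4*L - 2*L + ln (1/4)"
    by (intro tendsto_intros L(1) L2 q) simp
  have B: "(\<lambda>n. ln (\<Prod>k=1..n. 4 * (real k)^2 / (4 * (real k)^2 - 1))) \<longlonglongrightarrow> ln (pi/2)"
    by (intro tendsto_intros wallis) simp
  have "eventually (\<lambda>n. ln (\<Prod>k=1..n. 4 * (real k)^2 / (4 * (real k)^2 - 1)) =
         4 * stir n - 2 * stir (2*n) + ln (real n / (2*(2*real n + 1)))) sequentially"
    using eventually_ge_at_top[of 1] by eventually_elim (rule ln_wallis)
  hence "(\<lambda>n. 4 * stir n - 2 * stir (2*n) + ln (real n / (2*(2*real n + 1)))) \<longlonglongrightarrow> ln (pi/2)"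
    using B by (rule Lim_transform_eventually[rotated])
  hence "ln (pi/2) = 4*L - 2*L + ln (1/4)" using A LIMSEQ_unique by blast
  hence "L = (ln (pi/2) - ln (1/4)) / 2" by simp
  also have "ln (pi/2) - ln (1/4) = ln (2*pi)"
  proof -
    have "ln (4::real) = 2 * ln 2" using ln_realpow[of 2 2] by simp
    thus ?thesis using pi_gt_zero by (simp add: ln_div ln_mult)
  qed
  finally have "L = ln (2*pi) / 2" .
  thus ?thesis using L(1) by blast
qed

lemma stir_ge_lim: assumes "n \<ge> 1" shows "ln (2*pi) / 2 \<le> stir n"
proof -
  obtain L where L: "stir \<longlonglongrightarrow> L" "\<And>n. n \<ge> 1 \<Longrightarrow> L \<le> stir n" using stir_limit by blast
  have "L = ln (2*pi)/2" using LIMSEQ_unique[OF L(1) stir_lim_value] .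
  thus ?thesis using L(2)[OF assms] by simp
qed

lemma stir_exp: assumes "n \<ge> 1"
  shows "(fact n :: real) = exp (stir n) * real n ^ n * sqrt (real n) / exp (real n)"
proof -
  have np: "real n > 0" using assms by simp
  have "exp ((real n + 1/2) * ln (real n)) = real n powr (real n + 1/2)"
    using np by (simp add: powr_def)
  also have "\<dots> = real n ^ n * sqrt (real n)"
    using np by (simp add: powr_add powr_realpow powr_half_sqrt)
  finally have e: "exp ((real n + 1/2) * ln (real n)) = real n ^ n * sqrt (real n)" .
  have "ln (fact n :: real) = stir n - real n + (real n + 1/2) * ln (real n)" unfolding stir_def by simp
  hence "(fact n :: real) = exp (stir n - real n + (real n + 1/2) * ln (real n))"
    by (metis exp_ln fact_gt_zero)
  also have "\<dots> = exp (stir n) * exp ((real n + 1/2) * ln (real n)) / exp (real n)"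
    by (simp add: exp_add exp_diff)
  finally show ?thesis unfolding e by simp
qed

lemma stirling_lower: assumes "n \<ge> 1"
  shows "sqrt (2*pi*real n) * real n ^ n / exp (real n) \<le> fact n"
proof -
  have "exp (ln (2*pi)/2) = (2*pi) powr (1/2)" by (simp add: powr_def)
  also have "\<dots> = sqrt (2*pi)" by (simp add: powr_half_sqrt)
  finally have "exp (ln (2*pi)/2) = sqrt (2*pi)" .
  hence "sqrt (2*pi) \<le> exp (stir n)" using stir_ge_lim[OF assms] by (metis exp_le_cancel_iff)
  hence "sqrt (2*pi) * (real n ^ n * sqrt (real n) / exp (real n)) \<le> exp (stir n) * (real n ^ n * sqrt (real n) / exp (real n))"
    by (intro mult_right_mono) auto
  thus ?thesis unfolding stir_exp[OF assms] by (simp add: real_sqrt_mult mult_ac)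
qed

lemma stirling_upper: assumes "n \<ge> 1"
  shows "fact n \<le> exp 1 * sqrt (real n) * real n ^ n / exp (real n)"
proof -
  have "exp (stir n) \<le> exp 1" using stir_le_1[OF assms] by simp
  hence "exp (stir n) * (real n ^ n * sqrt (real n) / exp (real n)) \<le> exp 1 * (real n ^ n * sqrt (real n) / exp (real n))"
    by (intro mult_right_mono) auto
  thus ?thesis unfolding stir_exp[OF assms] by (simp add: ac_simps)
qed


lemma holder_sum:
  fixes f g :: "nat \<Rightarrow> real" and q q' :: real
  assumes K: "finite K" and f: "\<And>k. k \<in> K \<Longrightarrow> f k \<ge> 0" and g: "\<And>k. k \<in> K \<Longrightarrow> g k \<ge> 0"
    and q: "q > 1" "q' > 1" "1/q + 1/q' = 1"
  shows "(\<Sum>k\<in>K. f k * g k) \<le> (\<Sum>k\<in>K. f k powr q) powr (1/q) * (\<Sum>k\<in>K. g k powr q') powr (1/q')"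
proof -
  define A where "A = (\<Sum>k\<in>K. f k powr q)"
  define B where "B = (\<Sum>k\<in>K. g k powr q')"
  have A0: "A \<ge> 0" "B \<ge> 0" unfolding A_def B_def by (auto intro: sum_nonneg)
  show ?thesis
  proof (cases "A = 0 \<or> B = 0")
    case True
    hence "(\<Sum>k\<in>K. f k * g k) = 0"
    proof
      assume "A = 0"
      hence "\<forall>k\<in>K. f k powr q = 0" unfolding A_def using sum_nonneg_eq_0_iff[OF K, of "\<lambda>k. f k powr q"] by auto
      hence "\<forall>k\<in>K. f k = 0" by simp
      thus ?thesis by simp
    next
      assume "B = 0"
      hence "\<forall>k\<in>K. g k powr q' = 0" unfolding B_def using sum_nonneg_eq_0_iff[OF K, of "\<lambda>k. g k powr q'"] by auto
      hence "\<forall>k\<in>K. g k = 0" by simp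
      thus ?thesis by simp
    qed
    thus ?thesis unfolding A_def[symmetric] B_def[symmetric] by simp
  next
    case False
    hence Ap: "A > 0" "B > 0" using A0 by auto
    define \<alpha> where "\<alpha> = A powr (1/q)"
    define \<beta> where "\<beta> = B powr (1/q')"
    have ab: "\<alpha> > 0" "\<beta> > 0" unfolding \<alpha>_def \<beta>_def using Ap by auto
    have aq: "\<alpha> powr q = A" unfolding \<alpha>_def using Ap q by (simp add: powr_powr)
    have bq: "\<beta> powr q' = B" unfolding \<beta>_def using Ap q by (simp add: powr_powr)
    have "\<forall>k\<in>K. f k * g k / (\<alpha>*\<beta>) \<le> f k powr q / (A*q) + g k powr q' / (B*q')"
    proof
      fix k assume k: "k \<in> K"
      have "(f k/\<alpha>) * (g k/\<beta>) \<le> (f k/\<alpha>) powr q / q + (g k/\<beta>) powr q' / q'"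
        by (rule Youngs_inequality) (use q f[OF k] g[OF k] ab in auto)
      also have "(f k/\<alpha>) powr q = f k powr q / A" using f[OF k] ab by (simp add: powr_divide aq)
      also have "(g k/\<beta>) powr q' = g k powr q' / B" using g[OF k] ab by (simp add: powr_divide bq)
      finally show "f k * g k / (\<alpha>*\<beta>) \<le> f k powr q / (A*q) + g k powr q' / (B*q')" by simp
    qed
    hence "(\<Sum>k\<in>K. f k * g k / (\<alpha>*\<beta>)) \<le> (\<Sum>k\<in>K. f k powr q / (A*q) + g k powr q' / (B*q'))"
      by (intro sum_mono) auto
    also have "\<dots> = A/(A*q) + B/(B*q')" unfolding A_def B_def
      by (simp add: sum.distrib sum_divide_distrib)
    also have "\<dots> = 1" using Ap q by simp
    finally have "(\<Sum>k\<in>K. f k * g k) / (\<alpha>*\<beta>) \<le> 1" by (simp add: sum_divide_distrib)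
    hence "(\<Sum>k\<in>K. f k * g k) \<le> \<alpha>*\<beta>" using ab by (simp add: divide_le_eq)
    thus ?thesis unfolding \<alpha>_def \<beta>_def A_def B_def .
  qed
qed

lemma support_sum_bound:
  fixes F :: "nat \<Rightarrow> real"
  assumes F: "\<And>k. F k \<ge> 0"
  shows "finite (multinomial_support n N)"
    "(\<Sum>z\<in>multinomial_support n N. \<Prod>i<n. F (z i)) \<le> (\<Sum>k\<le>N. F k) ^ n"
proof -
  let ?S = "multinomial_support n N"
  let ?P = "PiE {..<n} (\<lambda>_. {..N})"
  have le: "z i \<le> N" if "z \<in> ?S" "i < n" for z i
  proof -
    have "z i \<le> (\<Sum>j<n. z j)" using that by (intro member_le_sum) auto
    thus ?thesis using that unfolding multinomial_support_def by simp
  qed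
  have inj: "inj_on (\<lambda>z. restrict z {..<n}) ?S"
  proof (rule inj_onI)
    fix x y assume xy: "x \<in> ?S" "y \<in> ?S" "restrict x {..<n} = restrict y {..<n}"
    show "x = y"
    proof
      fix i show "x i = y i"
      proof (cases "i < n")
        case True thus ?thesis using xy(3) by (metis lessThan_iff restrict_apply')
      next
        case False thus ?thesis using xy(1,2) unfolding multinomial_support_def by simp
      qed
    qed
  qed
  have sub: "(\<lambda>z. restrict z {..<n}) ` ?S \<subseteq> ?P"
  proof
    fix x assume "x \<in> (\<lambda>z. restrict z {..<n}) ` ?S"
    then obtain z where z: "z \<in> ?S" "x = restrict z {..<n}" by blast
    show "x \<in> ?P" unfolding z(2) restrict_PiE_iff using le[OF z(1)] by auto
  qed
  have finP: "finite ?P" by (intro finite_PiE) auto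
  show fin: "finite ?S"
    using finite_imageD[OF finite_subset[OF sub finP] inj] .
  have "(\<Sum>z\<in>?S. \<Prod>i<n. F (z i)) = (\<Sum>z\<in>?S. \<Prod>i<n. F (restrict z {..<n} i))"
    by (intro sum.cong prod.cong) auto
  also have "\<dots> = (\<Sum>x\<in>(\<lambda>z. restrict z {..<n}) ` ?S. \<Prod>i<n. F (x i))"
    using sum.reindex[OF inj, of "\<lambda>x. \<Prod>i<n. F (x i)"] by (simp add: o_def)
  also have "\<dots> \<le> (\<Sum>x\<in>?P. \<Prod>i<n. F (x i))"
    by (intro sum_mono2[OF finP sub]) (auto intro: prod_nonneg F)
  also have "\<dots> = (\<Prod>i<n. \<Sum>k\<le>N. F k)"
    using prod_sum_PiE[of "{..<n}" "\<lambda>_. {..N}" "\<lambda>_ k. F k"] by simp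
  also have "\<dots> = (\<Sum>k\<le>N. F k) ^ n" by simp
  finally show "(\<Sum>z\<in>?S. \<Prod>i<n. F (z i)) \<le> (\<Sum>k\<le>N. F k) ^ n" .
qed


definition aa :: "nat \<Rightarrow> real" where "aa k = real k ^ k / (fact k * exp (real k))"

lemma term_bound:
  fixes P :: real and Z N :: nat
  assumes "P \<ge> 0" "N > 0"
  shows "P ^ Z \<le> exp (- real N * (if real Z / real N = 0 then 0 else real Z / real N * ln (real Z / real N / P))) * (real Z / real N) ^ Z"
proof (cases "Z = 0")
  case True thus ?thesis by simp
next
  case False
  hence Zp: "real Z / real N > 0" using assms by simp
  show ?thesis
  proof (cases "P = 0")
    case True thus ?thesis using False Zp by simp
  next
    case False
    hence Pp: "P > 0" using assms by simp
    have "exp (- real N * (real Z / real N * ln (real Z / real N / P))) = exp (- real Z * ln (real Z / real N / P))"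
      using assms by simp
    also have "\<dots> = inverse (exp (ln (real Z / real N / P)) ^ Z)"
      by (simp add: exp_minus exp_of_nat_mult)
    also have "\<dots> = (P / (real Z / real N)) ^ Z"
    proof -
      have "real Z / real N / P > 0" using Pp Zp by (rule divide_pos_pos[rotated])
      hence "exp (ln (real Z / real N / P)) = real Z / real N / P" by (rule exp_ln)
      thus ?thesis by (simp add: power_inverse[symmetric] mult.commute)
    qed
    finally have eq: "exp (- real N * (real Z / real N * ln (real Z / real N / P))) * (real Z / real N) ^ Z = P ^ Z"
      using Zp assms by (auto simp add: power_divide power_mult_distrib)
    have ne: "(real Z / real N = 0) = False" using Zp by (metis less_irrefl)
    show ?thesis unfolding ne if_False using eq by linarith
  qed
qed

lemma pmf_bound:
  assumes ps: "prob_simplex n p" and z: "z \<in> multinomial_support n N" and N: "N > 0"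
  shows "multinomial_pmf n N p z \<le> fact N * exp (real N) / real N ^ N *
           exp (- real N * kl_div n (\<lambda>i. real (z i) / real N) p) * (\<Prod>i<n. aa (z i))"
proof -
  have pnn: "\<And>i. i < n \<Longrightarrow> p i \<ge> 0" using ps unfolding prob_simplex_def by auto
  have zs: "(\<Sum>i<n. z i) = N" using z unfolding multinomial_support_def by auto
  define T where "T i = (if real (z i) / real N = 0 then 0 else real (z i) / real N * ln (real (z i) / real N / p i))" for i
  have kl: "kl_div n (\<lambda>i. real (z i) / real N) p = (\<Sum>i<n. T i)" unfolding kl_div_def T_def by simp
  have "(\<Prod>i<n. p i ^ z i) \<le> (\<Prod>i<n. exp (- real N * T i) * (real (z i) / real N) ^ z i)"
  proof (intro prod_mono conjI)
    fix i assume i: "i \<in> {..<n}"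
    show "0 \<le> p i ^ z i" using pnn i by simp
    show "p i ^ z i \<le> exp (- real N * T i) * (real (z i) / real N) ^ z i"
      unfolding T_def using term_bound[of "p i" N "z i"] pnn i N by simp
  qed
  also have "\<dots> = exp (- real N * (\<Sum>i<n. T i)) * ((\<Prod>i<n. real (z i) ^ z i) / real N ^ N)"
    by (simp add: prod.distrib exp_sum[symmetric] sum_distrib_left power_divide prod_dividef power_sum zs[symmetric])
  finally have A: "(\<Prod>i<n. p i ^ z i) \<le> exp (- real N * (\<Sum>i<n. T i)) * ((\<Prod>i<n. real (z i) ^ z i) / real N ^ N)" .
  have B: "(\<Prod>i<n. aa (z i)) = (\<Prod>i<n. real (z i) ^ z i) / ((\<Prod>i<n. fact (z i)) * exp (real N))"
  proof -
    have "(\<Prod>i<n. exp (real (z i))) = exp (real N)"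
      by (simp add: exp_sum[symmetric] zs[symmetric])
    thus ?thesis unfolding aa_def by (simp add: prod_dividef prod.distrib)
  qed
  have Fp: "(\<Prod>i<n. fact (z i) :: real) > 0" by (intro prod_pos) auto
  have "multinomial_pmf n N p z = fact N / (\<Prod>i<n. fact (z i)) * (\<Prod>i<n. p i ^ z i)"
    unfolding multinomial_pmf_def by simp
  also have "\<dots> \<le> fact N / (\<Prod>i<n. fact (z i)) * (exp (- real N * (\<Sum>i<n. T i)) * ((\<Prod>i<n. real (z i) ^ z i) / real N ^ N))"
    by (intro mult_left_mono A) (use Fp in simp)
  also have "\<dots> = fact N * exp (real N) / real N ^ N * exp (- real N * (\<Sum>i<n. T i)) * (\<Prod>i<n. aa (z i))"
    unfolding B using Fp N by (simp add: field_simps)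
  finally show ?thesis unfolding kl .
qed


lemma aa_le: assumes "k \<ge> 1" shows "aa k \<le> 1 / sqrt (2*pi*real k)"
proof -
  have s: "sqrt (2*pi*real k) > 0" using assms by simp
  have "sqrt (2*pi*real k) * real k ^ k / exp (real k) \<le> fact k" by (rule stirling_lower[OF assms])
  hence "real k ^ k / exp (real k) \<le> fact k / sqrt (2*pi*real k)" using s by (simp add: field_simps)
  thus ?thesis unfolding aa_def using s by (simp add: field_simps)
qed

lemma aa_nonneg: "aa k \<ge> 0" unfolding aa_def by simp

lemma aa_powr_le: assumes "k \<ge> 1" "q > 0"
  shows "aa k powr q \<le> (2*pi) powr (-q/2) * (1 / real k powr (q/2))"
proof -
  have kp: "real k > 0" using assms by simp
  have "aa k powr q \<le> (1 / sqrt (2*pi*real k)) powr q"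
    by (rule powr_mono2) (use assms aa_nonneg aa_le in auto)
  also have "1 / sqrt (2*pi*real k) = (2*pi*real k) powr (-1/2)"
    using kp by (simp add: powr_minus_divide powr_half_sqrt[symmetric])
  also have "((2*pi*real k) powr (-1/2)) powr q = (2*pi*real k) powr (-q/2)"
    by (simp add: powr_powr)
  also have "\<dots> = (2*pi) powr (-q/2) * real k powr (-q/2)"
    using kp by (simp add: powr_mult)
  also have "real k powr (-q/2) = 1 / real k powr (q/2)"
    by (simp add: powr_minus_divide)
  finally show ?thesis .
qed

lemma zeta_summable: assumes "s > 1" shows "summable (\<lambda>k. 1 / real (Suc k) powr s)"
proof -
  have "summable (\<lambda>k. real k powr (-s))" using summable_real_powr_iff assms by simp
  hence "summable (\<lambda>k. real (Suc k) powr (-s))" by (subst summable_Suc_iff)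
  thus ?thesis by (simp add: powr_minus_divide)
qed

lemma sum_aa_powr: assumes "q > 2"
  shows "(\<Sum>k\<le>N. aa k powr q) \<le> 1 + (2*pi) powr (-q/2) * zeta_real (q/2)"
proof -
  have "(\<Sum>k\<le>N. aa k powr q) = aa 0 powr q + (\<Sum>k<N. aa (Suc k) powr q)"
    by (simp only: lessThan_Suc_atMost[symmetric] sum.lessThan_Suc_shift)
  also have "aa 0 powr q = 1" unfolding aa_def by simp
  also have "(\<Sum>k<N. aa (Suc k) powr q) \<le> (\<Sum>k<N. (2*pi) powr (-q/2) * (1 / real (Suc k) powr (q/2)))"
    by (intro sum_mono aa_powr_le) (use assms in auto)
  also have "\<dots> = (2*pi) powr (-q/2) * (\<Sum>k<N. 1 / real (Suc k) powr (q/2))"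
    by (simp add: sum_distrib_left)
  also have "(\<Sum>k<N. 1 / real (Suc k) powr (q/2)) \<le> zeta_real (q/2)"
    unfolding zeta_real_def by (intro sum_le_suminf zeta_summable) (use assms in auto)
  finally show ?thesis by (simp add: mult_left_mono)
qed

lemma geom_le: fixes y :: real assumes "0 \<le> y" "y < 1" shows "(\<Sum>k\<le>N. y^k) \<le> 1/(1-y)"
proof -
  have "(\<Sum>k\<le>N. y^k) = (\<Sum>k<Suc N. y^k)" by (simp add: lessThan_Suc_atMost)
  also have "\<dots> = (1 - y^Suc N)/(1-y)" using assms by (subst sum_gp_strict) auto
  also have "\<dots> \<le> 1/(1-y)" using assms by (intro divide_right_mono) auto
  finally show ?thesis .
qed


definition Fq :: "real \<Rightarrow> real \<Rightarrow> real" where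
  "Fq r q = (1 - 1/q) * Psi r + (1/q) * ln (1 + (2*pi) powr (-q/2) * zeta_real (q/2))"

lemma zeta_nonneg: assumes "s > 1" shows "zeta_real s \<ge> 0"
  unfolding zeta_real_def by (intro suminf_nonneg zeta_summable assms) auto

lemma key_identity:
  fixes r :: nat and q Z :: real
  assumes r: "r > 0" and q: "q > 1" and Z: "Z > 0"
  defines "y \<equiv> real r / (1 + real r)" and "q' \<equiv> q/(q-1)"
  shows "Z powr (1/q) * (1/(1-y)) powr (1/q') / (y powr (1/q')) ^ r
       = exp ((1 - 1/q) * Psi (real r) + (1/q) * ln Z)"
proof -
  have y: "y > 0" "y < 1" unfolding y_def using r by auto
  have iq: "1/q' = 1 - 1/q" unfolding q'_def using q by (simp add: field_simps)
  have one: "1/(1-y) = 1 + real r" unfolding y_def using r by (simp add: field_simps)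
  have lny: "ln y = ln (real r) - ln (1 + real r)" unfolding y_def using r by (simp add: ln_div)
  have "Z powr (1/q) = exp ((1/q) * ln Z)" using Z by (simp add: powr_def)
  moreover have "(1/(1-y)) powr (1/q') = exp ((1 - 1/q) * ln (1 + real r))"
    unfolding one iq using r by (simp add: powr_def)
  moreover have "(y powr (1/q')) ^ r = exp ((1 - 1/q) * (real r * (ln (real r) - ln (1 + real r))))"
    using y unfolding iq by (simp add: powr_def exp_of_nat_mult[symmetric] lny algebra_simps)
  ultimately have "Z powr (1/q) * (1/(1-y)) powr (1/q') / (y powr (1/q')) ^ r
     = exp ((1/q) * ln Z + (1 - 1/q) * ln (1 + real r) - (1 - 1/q) * (real r * (ln (real r) - ln (1 + real r))))"
    by (simp add: exp_add exp_diff)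
  also have "(1/q) * ln Z + (1 - 1/q) * ln (1 + real r) - (1 - 1/q) * (real r * (ln (real r) - ln (1 + real r)))
     = (1 - 1/q) * Psi (real r) + (1/q) * ln Z"
    unfolding Psi_def by (simp add: algebra_simps)
  finally show ?thesis .
qed


lemma main_q:
  fixes n r :: nat and p :: "nat \<Rightarrow> real" and c q :: real
  assumes n: "n > 0" and r: "r > 0" and ps: "prob_simplex n p" and q: "q > 2"
  shows "multinomial_prob n (n*r) p (\<lambda>z. kl_div n (\<lambda>i. real (z i) / real (n*r)) p \<ge> c)
     \<le> fact (n*r) * exp (real (n*r)) / real (n*r) ^ (n*r) * exp (- real (n*r) * c) * exp (real n * Fq (real r) q)"
proof -
  define N where "N = n*r"
  have Np: "N > 0" unfolding N_def using n r by simp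
  define S where "S = multinomial_support n N"
  define C0 where "C0 = (fact N * exp (real N) / real N ^ N :: real)"
  have C0: "C0 \<ge> 0" unfolding C0_def by simp
  define kl where "kl z = kl_div n (\<lambda>i. real (z i) / real N) p" for z
  have finS: "finite S" unfolding S_def by (rule support_sum_bound(1)[of aa]) (rule aa_nonneg)
  have prodnn: "(\<Prod>i<n. aa (z i)) \<ge> 0" for z by (intro prod_nonneg) (auto intro: aa_nonneg)
  have "multinomial_prob n N p (\<lambda>z. kl z \<ge> c) = (\<Sum>z\<in>{z\<in>S. c \<le> kl z}. multinomial_pmf n N p z)"
    unfolding multinomial_prob_def S_def by simp
  also have "\<dots> \<le> (\<Sum>z\<in>{z\<in>S. c \<le> kl z}. C0 * exp (- real N * c) * (\<Prod>i<n. aa (z i)))"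
  proof (rule sum_mono)
    fix z assume z: "z \<in> {z\<in>S. c \<le> kl z}"
    have "multinomial_pmf n N p z \<le> C0 * exp (- real N * kl z) * (\<Prod>i<n. aa (z i))"
      unfolding C0_def kl_def using pmf_bound[OF ps _ Np, of z] z unfolding S_def by simp
    also have "\<dots> \<le> C0 * exp (- real N * c) * (\<Prod>i<n. aa (z i))"
      using z C0 prodnn[of z] by (intro mult_right_mono mult_left_mono) (auto intro: mult_left_mono)
    finally show "multinomial_pmf n N p z \<le> C0 * exp (- real N * c) * (\<Prod>i<n. aa (z i))" .
  qed
  also have "\<dots> \<le> (\<Sum>z\<in>S. C0 * exp (- real N * c) * (\<Prod>i<n. aa (z i)))"
    by (intro sum_mono2 finS) (use C0 prodnn in auto)
  also have "\<dots> = C0 * exp (- real N * c) * (\<Sum>z\<in>S. \<Prod>i<n. aa (z i))"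
    by (simp add: sum_distrib_left)
  finally have step1: "multinomial_prob n N p (\<lambda>z. kl z \<ge> c) \<le> C0 * exp (- real N * c) * (\<Sum>z\<in>S. \<Prod>i<n. aa (z i))" .
  define y where "y = real r / (1 + real r)"
  define q' where "q' = q/(q-1)"
  define w where "w = y powr (1/q')"
  have y: "y > 0" "y < 1" unfolding y_def using r by auto
  have q': "q' > 1" "1/q + 1/q' = 1" unfolding q'_def using q by (auto simp: field_simps)
  have w: "w > 0" unfolding w_def using y by simp
  have "(\<Sum>z\<in>S. \<Prod>i<n. aa (z i)) = (\<Sum>z\<in>S. (\<Prod>i<n. aa (z i) * w ^ z i) / w ^ N)"
  proof (rule sum.cong[OF refl])
    fix z assume z: "z \<in> S"
    have zs: "(\<Sum>i<n. z i) = N" using z unfolding S_def multinomial_support_def by simp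
    have "(\<Prod>i<n. w ^ z i) = w ^ N" unfolding zs[symmetric] by (simp add: power_sum)
    hence "(\<Prod>i<n. aa (z i) * w ^ z i) = (\<Prod>i<n. aa (z i)) * w ^ N"
      by (simp add: prod.distrib)
    thus "(\<Prod>i<n. aa (z i)) = (\<Prod>i<n. aa (z i) * w ^ z i) / w ^ N" using w by simp
  qed
  also have "\<dots> = (\<Sum>z\<in>S. \<Prod>i<n. aa (z i) * w ^ z i) / w ^ N" by (simp add: sum_divide_distrib)
  also have "\<dots> \<le> (\<Sum>k\<le>N. aa k * w ^ k) ^ n / w ^ N"
    unfolding S_def using w by (intro divide_right_mono support_sum_bound(2)) (auto intro: aa_nonneg mult_nonneg_nonneg)
  finally have step2: "(\<Sum>z\<in>S. \<Prod>i<n. aa (z i)) \<le> (\<Sum>k\<le>N. aa k * w ^ k) ^ n / w ^ N" .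
  define Z where "Z = 1 + (2*pi) powr (-q/2) * zeta_real (q/2)"
  have "(2*pi) powr (-q/2) * zeta_real (q/2) \<ge> 0"
    by (intro mult_nonneg_nonneg zeta_nonneg) (use q in auto)
  hence Z: "Z > 0" unfolding Z_def by linarith
  have wk: "(w ^ k) powr q' = y ^ k" for k
  proof -
    have "w ^ k = y powr (real k * (1/q'))" unfolding w_def using y by (intro powr_power) simp
    hence "(w ^ k) powr q' = y powr (real k * (1/q') * q')" by (simp add: powr_powr)
    also have "real k * (1/q') * q' = real k" using q' by simp
    finally have "(w ^ k) powr q' = y powr real k" .
    thus ?thesis using y by (simp add: powr_realpow)
  qed
  have "(\<Sum>k\<le>N. aa k * w ^ k) \<le> (\<Sum>k\<le>N. aa k powr q) powr (1/q) * (\<Sum>k\<le>N. (w ^ k) powr q') powr (1/q')"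
    by (rule holder_sum) (use q q' w aa_nonneg in auto)
  also have "\<dots> \<le> Z powr (1/q) * (1/(1-y)) powr (1/q')"
  proof (intro mult_mono powr_mono2)
    show "(\<Sum>k\<le>N. aa k powr q) \<le> Z" unfolding Z_def using sum_aa_powr[OF q] .
    show "(\<Sum>k\<le>N. (w ^ k) powr q') \<le> 1/(1-y)" unfolding wk using geom_le y by simp
  qed (use q q' y in \<open>auto intro: sum_nonneg\<close>)
  finally have hold: "(\<Sum>k\<le>N. aa k * w ^ k) \<le> Z powr (1/q) * (1/(1-y)) powr (1/q')" .
  have snn: "(\<Sum>k\<le>N. aa k * w ^ k) \<ge> 0" using w by (intro sum_nonneg) (auto intro: aa_nonneg mult_nonneg_nonneg)
  have "(\<Sum>k\<le>N. aa k * w ^ k) ^ n / w ^ N \<le> (Z powr (1/q) * (1/(1-y)) powr (1/q')) ^ n / w ^ N"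
    using w by (intro divide_right_mono power_mono hold snn) auto
  also have "\<dots> = (Z powr (1/q) * (1/(1-y)) powr (1/q') / w ^ r) ^ n"
    unfolding N_def by (simp add: power_divide power_mult mult.commute[of n r])
  also have "Z powr (1/q) * (1/(1-y)) powr (1/q') / w ^ r = exp (Fq (real r) q)"
    unfolding w_def y_def q'_def Fq_def Z_def[symmetric]
    by (rule key_identity[OF r _ Z]) (use q in simp)
  also have "exp (Fq (real r) q) ^ n = exp (real n * Fq (real r) q)" by (simp add: exp_of_nat_mult)
  finally have step3: "(\<Sum>k\<le>N. aa k * w ^ k) ^ n / w ^ N \<le> exp (real n * Fq (real r) q)" .
  have "C0 * exp (- real N * c) \<ge> 0" using C0 by simp
  hence "C0 * exp (- real N * c) * (\<Sum>z\<in>S. \<Prod>i<n. aa (z i)) \<le> C0 * exp (- real N * c) * exp (real n * Fq (real r) q)"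
    using step2 step3 by (intro mult_left_mono) auto
  hence "multinomial_prob n N p (\<lambda>z. kl z \<ge> c) \<le> C0 * exp (- real N * c) * exp (real n * Fq (real r) q)"
    using step1 by linarith
  thus ?thesis unfolding N_def C0_def kl_def .
qed


lemma Delta_Fq: "Delta r = Inf (Fq r ` {2<..})"
  unfolding Delta_def Fq_def by simp

theorem lemma1:
  fixes n r :: nat and p :: "nat \<Rightarrow> real" and \<mu> :: real
  assumes "n > 0" and "r > 0" and "prob_simplex n p" and "\<mu> > 0"
  shows "multinomial_prob n (n*r) p
           (\<lambda>z. kl_div n (\<lambda>i. real (z i) / real (n*r)) p \<ge> (Delta (real r) + \<mu>) / real r)
         \<le> sqrt (2 * pi * exp 1 * real n * real r) * exp (- real n * \<mu>)"
proof -
  define N where "N = n*r"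
  have Np: "N \<ge> 1" unfolding N_def using assms by simp
  define c where "c = (Delta (real r) + \<mu>) / real r"
  define P where "P = multinomial_prob n (n*r) p (\<lambda>z. kl_div n (\<lambda>i. real (z i) / real (n*r)) p \<ge> c)"
  define C0 where "C0 = (fact N * exp (real N) / real N ^ N :: real)"
  define \<Delta> where "\<Delta> = Delta (real r)"
  define B where "B = C0 * exp (- real n * \<mu>)"
  have Nc: "real N * c = real n * (\<Delta> + \<mu>)" unfolding N_def c_def \<Delta>_def using assms by simp
  have C0nn: "C0 \<ge> 0" unfolding C0_def by simp
  have Bq: "P \<le> B * exp (real n * (Fq (real r) q - \<Delta>))" if q: "q > 2" for q
  proof -
    have "P \<le> C0 * exp (- real N * c) * exp (real n * Fq (real r) q)"
      unfolding P_def C0_def N_def using main_q[OF assms(1,2,3) q, of c] by simp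
    also have "C0 * exp (- real N * c) * exp (real n * Fq (real r) q) = C0 * (exp (- real n * \<mu>) * exp (real n * (Fq (real r) q - \<Delta>)))"
    proof -
      have "exp (- real N * c) * exp (real n * Fq (real r) q) = exp (- real N * c + real n * Fq (real r) q)"
        by (rule exp_add[symmetric])
      also have "- real N * c + real n * Fq (real r) q = - real n * \<mu> + real n * (Fq (real r) q - \<Delta>)"
        using Nc by (simp add: algebra_simps)
      also have "exp \<dots> = exp (- real n * \<mu>) * exp (real n * (Fq (real r) q - \<Delta>))"
        by (rule exp_add)
      finally show ?thesis by (simp add: mult.assoc)
    qed
    finally show ?thesis unfolding B_def by (simp add: mult.assoc)
  qed
  have PB: "P \<le> B"
  proof (cases "P \<le> 0")
    case True thus ?thesis unfolding B_def using C0nn by (smt (verit) exp_gt_zero mult_nonneg_nonneg)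
  next
    case False
    hence Pp: "P > 0" by simp
    have Bp: "B > 0"
    proof -
      have "P \<le> B * exp (real n * (Fq (real r) 3 - \<Delta>))" using Bq[of 3] by simp
      thus ?thesis using Pp by (smt (verit) exp_gt_zero mult_nonpos_nonneg)
    qed
    define \<delta> where "\<delta> = ln (P / B) / real n"
    have "\<Delta> + \<delta> \<le> Fq (real r) q" if q: "q > 2" for q
    proof -
      have "P / B \<le> exp (real n * (Fq (real r) q - \<Delta>))" using Bq[OF q] Bp by (simp add: divide_le_eq mult.commute)
      moreover have "P / B > 0" using Pp Bp by simp
      ultimately have "ln (P / B) \<le> real n * (Fq (real r) q - \<Delta>)"
        by (metis ln_exp ln_le_cancel_iff exp_gt_zero)
      hence "\<delta> \<le> Fq (real r) q - \<Delta>" unfolding \<delta>_def using assms(1) by (simp add: divide_le_eq mult.commute)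
      thus ?thesis by simp
    qed
    hence "\<Delta> + \<delta> \<le> Inf (Fq (real r) ` {2<..})"
      by (intro cInf_greatest) auto
    hence "\<delta> \<le> 0" unfolding \<Delta>_def Delta_Fq by simp
    hence "ln (P / B) \<le> 0" unfolding \<delta>_def using assms(1) by (simp add: divide_le_0_iff)
    hence "P / B \<le> 1" using Pp Bp by simp
    thus ?thesis using Bp by (simp add: divide_le_eq)
  qed
  have "C0 \<le> exp 1 * sqrt (real N)"
  proof -
    have "fact N \<le> exp 1 * sqrt (real N) * real N ^ N / exp (real N)" by (rule stirling_upper[OF Np])
    thus ?thesis unfolding C0_def using Np by (simp add: field_simps)
  qed
  also have "exp 1 * sqrt (real N) \<le> sqrt (2 * pi * exp 1 * real n * real r)"
  proof -
    have e3: "exp 1 \<le> (3::real)" by (rule exp_le)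
    have "exp 1 * exp 1 \<le> 2 * pi * exp 1" using e3 pi_gt3 by (intro mult_right_mono) auto
    hence "exp 1 * exp 1 * real N \<le> 2 * pi * exp 1 * real N" by (intro mult_right_mono) auto
    moreover have "(exp 1 * sqrt (real N))^2 = exp 1 * exp 1 * real N"
      by (simp add: power_mult_distrib power2_eq_square[of "exp 1"])
    ultimately have "(exp 1 * sqrt (real N))^2 \<le> 2 * pi * exp 1 * real n * real r"
      unfolding N_def by (simp add: mult.assoc)
    thus ?thesis by (simp add: real_le_rsqrt)
  qed
  finally have "B \<le> sqrt (2 * pi * exp 1 * real n * real r) * exp (- real n * \<mu>)"
    unfolding B_def by (simp add: mult_right_mono)
  with PB show ?thesis unfolding P_def c_def by simp
qed

end
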